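(* Let $P$ be an $r$-differential poset and $P'$ an $r'$-differential poset, and let $p''_n$ be the number of rank-$n$ elements of the Cartesian product $P\times P'$ (with $p''_k=0$ for $k<0$ and $\Delta p''_n=p''_n-p''_{n-1}$). Then for every $n\ge1$ and $1\le j\le n$ one has $\Delta p''_n\ge \Delta p''_{n-j}$; that is, $\Delta p''_1\le\Delta p''_2\le\cdots$.
   Context: An $r$-differential poset ($r$ a positive integer) is a graded poset with a minimum element, finite intervals and finite rank sets, such that an element covering exactly $m$ elements is covered by exactly $m+r$ elements, and two distinct elements that both cover exactly $m$ common elements are both covered by exactly $m$ common elements. The Cartesian product $P\times P'$ carries the componentwise order and rank function equal to the sum of ranks; it is an $(r+r')$-differential poset. *)

theory Defs
  imports Main
begin

definition poset_on :: "'a set \<Rightarrow> ('a \<Rightarrow> 'a \<Rightarrow> bool) \<Rightarrow> bool" where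
  "poset_on P le \<longleftrightarrow>
     (\<forall>x\<in>P. le x x) \<and>
     (\<forall>x\<in>P. \<forall>y\<in>P. le x y \<and> le y x \<longrightarrow> x = y) \<and>
     (\<forall>x\<in>P. \<forall>y\<in>P. \<forall>z\<in>P. le x y \<and> le y z \<longrightarrow> le x z)"

definition covers :: "'a set \<Rightarrow> ('a \<Rightarrow> 'a \<Rightarrow> bool) \<Rightarrow> 'a \<Rightarrow> 'a \<Rightarrow> bool" where
  "covers P le x y \<longleftrightarrow> x \<in> P \<and> y \<in> P \<and> le x y \<and> x \<noteq> y \<and>
     \<not> (\<exists>z\<in>P. le x z \<and> le z y \<and> z \<noteq> x \<and> z \<noteq> y)"

definition graded_locfin_poset :: "'a set \<Rightarrow> ('a \<Rightarrow> 'a \<Rightarrow> bool) \<Rightarrow> ('a \<Rightarrow> nat) \<Rightarrow> bool" where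
  "graded_locfin_poset P le rk \<longleftrightarrow>
     poset_on P le \<and>
     (\<exists>z\<in>P. (\<forall>x\<in>P. le z x) \<and> rk z = 0) \<and>
     (\<forall>x y. covers P le x y \<longrightarrow> rk y = rk x + 1) \<and>
     (\<forall>x\<in>P. \<forall>y\<in>P. finite {z\<in>P. le x z \<and> le z y}) \<and>
     (\<forall>n. finite {x\<in>P. rk x = n})"

definition differential_poset ::
  "'a set \<Rightarrow> ('a \<Rightarrow> 'a \<Rightarrow> bool) \<Rightarrow> ('a \<Rightarrow> nat) \<Rightarrow> nat \<Rightarrow> bool" where
  "differential_poset P le rk r \<longleftrightarrow>
     r > 0 \<and> graded_locfin_poset P le rk \<and>
     (\<forall>x\<in>P. \<forall>m. card {y. covers P le y x} = m \<longrightarrow>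
          finite {y. covers P le x y} \<and> card {y. covers P le x y} = m + r) \<and>
     (\<forall>x\<in>P. \<forall>y\<in>P. \<forall>m. x \<noteq> y \<and>
          card {z. covers P le z x \<and> covers P le z y} = m \<longrightarrow>
          finite {z. covers P le x z \<and> covers P le y z} \<and>
          card {z. covers P le x z \<and> covers P le y z} = m)"

definition prod_le :: "('a \<Rightarrow> 'a \<Rightarrow> bool) \<Rightarrow> ('b \<Rightarrow> 'b \<Rightarrow> bool) \<Rightarrow> 'a \<times> 'b \<Rightarrow> 'a \<times> 'b \<Rightarrow> bool" where
  "prod_le le le' u v \<longleftrightarrow> le (fst u) (fst v) \<and> le' (snd u) (snd v)"

definition prod_rk :: "('a \<Rightarrow> nat) \<Rightarrow> ('b \<Rightarrow> nat) \<Rightarrow> 'a \<times> 'b \<Rightarrow> nat" where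
  "prod_rk rk rk' u = rk (fst u) + rk' (snd u)"

definition rank_count :: "'a set \<Rightarrow> ('a \<Rightarrow> nat) \<Rightarrow> int \<Rightarrow> int" where
  "rank_count P rk n = (if n < 0 then 0 else int (card {x\<in>P. rk x = nat n}))"

definition delta_rank_count :: "'a set \<Rightarrow> ('a \<Rightarrow> nat) \<Rightarrow> int \<Rightarrow> int" where
  "delta_rank_count P rk n = rank_count P rk n - rank_count P rk (n - 1)"

end

theory Submission imports Defs Complex_Main "HOL-Library.Function_Algebras" begin


lemma fun_sum_apply: "(sum f A) x = (\<Sum>a\<in>A. f a x)" for f :: "'i \<Rightarrow> 'b \<Rightarrow> real"
  by (induction A rule: infinite_finite_induct) auto

definition fsc :: "real \<Rightarrow> ('b \<Rightarrow> real) \<Rightarrow> ('b \<Rightarrow> real)" where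
  "fsc c f = (\<lambda>x. c * f x)"

interpretation fv: vector_space fsc
  by unfold_locales (simp_all add: fsc_def fun_eq_iff distrib_left distrib_right)

lemma M_inj:
  fixes M :: "'a \<Rightarrow> 'b \<Rightarrow> real"
  assumes fS: "finite S"
    and ker: "\<And>c. (\<forall>y. (\<Sum>s\<in>S. c s * M s y) = 0) \<Longrightarrow> (\<forall>s\<in>S. c s = 0)"
  shows "inj_on M S"
proof (rule inj_onI, rule ccontr)
  fix s s' assume s: "s \<in> S" "s' \<in> S" "M s = M s'" "s \<noteq> s'"
  define c where "c x = (if x = s then (1::real) else if x = s' then -1 else 0)" for x
  have "\<forall>y. (\<Sum>x\<in>S. c x * M x y) = 0"
  proof
    fix y
    have "(\<Sum>x\<in>S. c x * M x y) = (\<Sum>x\<in>S. (if x = s then M s y else 0) - (if x = s' then M s' y else 0))"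
      by (rule sum.cong) (use s(4) in \<open>auto simp: c_def\<close>)
    also have "\<dots> = 0" using s fS by (simp add: sum_subtractf)
    finally show "(\<Sum>x\<in>S. c x * M x y) = 0" .
  qed
  from ker[OF this] s show False by (auto simp: c_def)
qed

lemma M_indep:
  fixes M :: "'a \<Rightarrow> 'b \<Rightarrow> real"
  assumes fS: "finite S" and inj: "inj_on M S"
    and ker: "\<And>c. (\<forall>y. (\<Sum>s\<in>S. c s * M s y) = 0) \<Longrightarrow> (\<forall>s\<in>S. c s = 0)"
  shows "fv.independent (M ` S)"
proof (rule fv.independent_if_scalars_zero)
  show "finite (M ` S)" using fS by simp
  fix f x assume h: "(\<Sum>a\<in>M ` S. fsc (f a) a) = 0" and x: "x \<in> M ` S"
  have h2: "(\<Sum>s\<in>S. fsc (f (M s)) (M s)) = 0"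
    using h by (simp add: sum.reindex[OF inj])
  have "\<forall>y. (\<Sum>s\<in>S. f (M s) * M s y) = 0"
  proof (intro allI)
    fix y
    show "(\<Sum>s\<in>S. f (M s) * M s y) = 0"
      using fun_cong[OF h2, of y] by (simp add: fun_sum_apply fsc_def)
  qed
  from ker[OF this] x show "f x = 0" by auto
qed

lemma M_span:
  fixes M :: "'a \<Rightarrow> 'b \<Rightarrow> real"
  assumes fT: "finite T"
    and supp: "\<And>s y. s \<in> S \<Longrightarrow> M s y \<noteq> 0 \<Longrightarrow> y \<in> T"
  shows "M ` S \<subseteq> fv.span ((\<lambda>t y. if y = t then 1 else 0) ` T)"
proof
  fix v assume "v \<in> M ` S"
  then obtain s where s: "s \<in> S" "v = M s" by auto
  let ?d = "\<lambda>t y. if y = t then (1::real) else 0"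
  have "M s = (\<Sum>t\<in>T. fsc (M s t) (?d t))"
  proof
    fix y
    have "(\<Sum>t\<in>T. fsc (M s t) (?d t)) y = (\<Sum>t\<in>T. if y = t then M s t else 0)"
      unfolding fun_sum_apply fsc_def by (rule sum.cong) auto
    also have "\<dots> = M s y" using supp[OF s(1), of y] fT by (cases "y \<in> T") auto
    finally show "M s y = (\<Sum>t\<in>T. fsc (M s t) (?d t)) y" by simp
  qed
  also have "\<dots> \<in> fv.span (?d ` T)"
  proof (rule fv.span_sum)
    fix t assume "t \<in> T"
    thus "fsc (M s t) (?d t) \<in> fv.span (?d ` T)"
      by (intro fv.span_scale fv.span_base) simp
  qed
  finally show "v \<in> fv.span (?d ` T)" using s by simp
qed

lemma inj_card_le:
  fixes S :: "'a set" and T :: "'b set" and M :: "'a \<Rightarrow> 'b \<Rightarrow> real"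
  assumes fS: "finite S" and fT: "finite T"
    and supp: "\<And>s y. s \<in> S \<Longrightarrow> M s y \<noteq> 0 \<Longrightarrow> y \<in> T"
    and ker: "\<And>c. (\<forall>y. (\<Sum>s\<in>S. c s * M s y) = 0) \<Longrightarrow> (\<forall>s\<in>S. c s = 0)"
  shows "card S \<le> card T"
proof -
  let ?d = "\<lambda>t y. if y = t then (1::real) else 0"
  have inj: "inj_on M S" by (rule M_inj[OF fS ker])
  have "card (M ` S) \<le> card (?d ` T)"
    using fv.independent_span_bound[OF _ M_indep[OF fS inj ker] M_span[OF fT supp]] fT by simp
  also have "\<dots> \<le> card T" using fT card_image_le by blast
  finally show ?thesis using card_image[OF inj] by simp
qed


lemma sq_expand:
  fixes c :: "'a \<Rightarrow> real" and M :: "'a \<Rightarrow> 'b \<Rightarrow> real"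
  shows "(\<Sum>y\<in>T. (\<Sum>s\<in>S. c s * M s y)^2) = (\<Sum>s\<in>S. \<Sum>s'\<in>S. c s * c s' * (\<Sum>y\<in>T. M s y * M s' y))"
proof -
  have "(\<Sum>y\<in>T. (\<Sum>s\<in>S. c s * M s y)^2) = (\<Sum>y\<in>T. \<Sum>s\<in>S. \<Sum>s'\<in>S. c s * c s' * (M s y * M s' y))"
    by (simp add: power2_eq_square sum_product algebra_simps)
  also have "\<dots> = (\<Sum>s\<in>S. \<Sum>y\<in>T. \<Sum>s'\<in>S. c s * c s' * (M s y * M s' y))"
    by (rule sum.swap)
  also have "\<dots> = (\<Sum>s\<in>S. \<Sum>s'\<in>S. \<Sum>y\<in>T. c s * c s' * (M s y * M s' y))"
    by (rule sum.cong[OF refl], rule sum.swap)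
  also have "\<dots> = (\<Sum>s\<in>S. \<Sum>s'\<in>S. c s * c s' * (\<Sum>y\<in>T. M s y * M s' y))"
    by (simp add: sum_distrib_left)
  finally show ?thesis .
qed



lemma ind_sum:
  assumes "finite T" "\<And>y. A y \<Longrightarrow> B y \<Longrightarrow> y \<in> T"
  shows "(\<Sum>y\<in>T. (if A y then 1 else 0) * (if B y then 1 else (0::real))) = real (card {y. A y \<and> B y})"
proof -
  have "{y. A y \<and> B y} = {y\<in>T. A y \<and> B y}" using assms(2) by auto
  moreover have "(\<Sum>y\<in>T. (if A y then 1 else 0) * (if B y then 1 else (0::real))) = (\<Sum>y\<in>T. if A y \<and> B y then 1 else 0)"
    by (rule sum.cong) auto
  moreover have "T \<inter> {y\<in>T. A y \<and> B y} = {y\<in>T. A y \<and> B y}" by auto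
  ultimately show ?thesis using assms(1) by (simp add: sum.If_cases)
qed

lemma rank_mono:
  assumes D: "differential_poset P le rk r"
  shows "card {x\<in>P. rk x = n} \<le> card {x\<in>P. rk x = Suc n}"
proof -
  let ?cv = "covers P le"
  let ?S = "{x\<in>P. rk x = n}" and ?T = "{x\<in>P. rk x = Suc n}" and ?R = "{x\<in>P. rk x + 1 = n}"
  have r0: "r > 0" and G: "graded_locfin_poset P le rk" using D by (auto simp: differential_poset_def)
  have fin: "finite {x\<in>P. rk x = k}" for k using G by (auto simp: graded_locfin_poset_def)
  have cvrk: "?cv x y \<Longrightarrow> rk y = rk x + 1" for x y using G by (auto simp: graded_locfin_poset_def)
  have cvP: "?cv x y \<Longrightarrow> x \<in> P \<and> y \<in> P" for x y by (auto simp: covers_def)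
  have fR: "finite ?R" by (rule finite_subset[OF _ fin[of "n - 1"]]) auto
  have up_diag: "card {y. ?cv x y} = card {z. ?cv z x} + r" if "x \<in> P" for x
    using D that unfolding differential_poset_def by blast
  have up_off: "card {z. ?cv x z \<and> ?cv y z} = card {z. ?cv z x \<and> ?cv z y}"
    if "x \<in> P" "y \<in> P" "x \<noteq> y" for x y
    using D that unfolding differential_poset_def by blast
  define M where "M s y = (if ?cv s y then 1 else (0::real))" for s y
  show ?thesis
  proof (rule inj_card_le[where M = M])
    show "finite ?S" "finite ?T" by (rule fin)+
    show "y \<in> ?T" if "s \<in> ?S" "M s y \<noteq> 0" for s y
      using that cvrk[of s y] cvP[of s y] by (auto simp: M_def split: if_splits)
    fix c :: "'a \<Rightarrow> real"
    assume h: "\<forall>y. (\<Sum>s\<in>?S. c s * M s y) = 0"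
    have up: "(\<Sum>y\<in>?T. M s y * M s' y) = real (card {y. ?cv s y \<and> ?cv s' y})"
      if "s \<in> ?S" "s' \<in> ?S" for s s'
      unfolding M_def by (rule ind_sum[OF fin]) (use that cvrk cvP in force)
    have dn: "(\<Sum>z\<in>?R. M z s * M z s') = real (card {z. ?cv z s \<and> ?cv z s'})"
      if "s \<in> ?S" "s' \<in> ?S" for s s'
      unfolding M_def by (rule ind_sum[OF fR]) (use that cvrk cvP in force)
    have rel: "real (card {y. ?cv s y \<and> ?cv s' y}) = real (card {z. ?cv z s \<and> ?cv z s'}) + (if s = s' then real r else 0)"
      if "s \<in> ?S" "s' \<in> ?S" for s s'
      using that up_diag up_off by auto
    have "0 = (\<Sum>y\<in>?T. (\<Sum>s\<in>?S. c s * M s y)^2)" using h by simp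
    also have "\<dots> = (\<Sum>s\<in>?S. \<Sum>s'\<in>?S. c s * c s' * (\<Sum>y\<in>?T. M s y * M s' y))" by (rule sq_expand)
    also have "\<dots> = (\<Sum>s\<in>?S. \<Sum>s'\<in>?S. c s * c s' * (\<Sum>z\<in>?R. M z s * M z s') + (if s = s' then real r * c s * c s' else 0))"
    proof (intro sum.cong refl)
      fix s s' assume a: "s \<in> ?S" "s' \<in> ?S"
      show "c s * c s' * (\<Sum>y\<in>?T. M s y * M s' y) = c s * c s' * (\<Sum>z\<in>?R. M z s * M z s') + (if s = s' then real r * c s * c s' else 0)"
        unfolding up[OF a] rel[OF a] dn[OF a, symmetric] by (simp add: algebra_simps)
    qed
    also have "\<dots> = (\<Sum>s\<in>?S. \<Sum>s'\<in>?S. c s * c s' * (\<Sum>z\<in>?R. M z s * M z s')) + real r * (\<Sum>s\<in>?S. (c s)^2)"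
      using fin[of n] by (simp add: sum.distrib sum_distrib_left power2_eq_square mult.assoc)
    also have "(\<Sum>s\<in>?S. \<Sum>s'\<in>?S. c s * c s' * (\<Sum>z\<in>?R. M z s * M z s')) = (\<Sum>z\<in>?R. (\<Sum>s\<in>?S. c s * M z s)^2)"
      by (rule sq_expand[symmetric])
    finally have eq: "0 = (\<Sum>z\<in>?R. (\<Sum>s\<in>?S. c s * M z s)^2) + real r * (\<Sum>s\<in>?S. (c s)^2)" .
    have "(\<Sum>z\<in>?R. (\<Sum>s\<in>?S. c s * M z s)^2) \<ge> 0" by (simp add: sum_nonneg)
    with eq r0 have "(\<Sum>s\<in>?S. (c s)^2) \<le> 0"
      by (smt (verit) of_nat_0_less_iff sum_nonneg zero_le_power2 mult_pos_pos)
    hence "(\<Sum>s\<in>?S. (c s)^2) = 0" by (simp add: sum_nonneg antisym)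
    with fin[of n] show "\<forall>s\<in>?S. c s = 0" by (simp add: sum_nonneg_eq_0_iff)
  qed
qed


lemma conv_delta:
  fixes a b :: "nat \<Rightarrow> int"
  shows "(\<Sum>k\<le>Suc m. a k * b (Suc m - k)) - (\<Sum>k\<le>m. a k * b (m - k))
       = (\<Sum>k\<le>Suc m. (a k - (if k = 0 then 0 else a (k - 1))) * b (Suc m - k))"
proof -
  have "(\<Sum>k\<le>Suc m. (if k = 0 then 0 else a (k - 1)) * b (Suc m - k)) = (\<Sum>k\<le>m. a k * b (m - k))"
    by (subst sum.atMost_Suc_shift) simp
  thus ?thesis by (simp add: algebra_simps sum_subtractf)
qed

lemma d_mono:
  fixes da b :: "nat \<Rightarrow> int"
  assumes "\<And>k. da k \<ge> 0" "\<And>k. b k \<le> b (Suc k)" "\<And>k. b k \<ge> 0"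
  shows "(\<Sum>k\<le>m. da k * b (m - k)) \<le> (\<Sum>k\<le>Suc m. da k * b (Suc m - k))"
proof -
  have "(\<Sum>k\<le>m. da k * b (m - k)) \<le> (\<Sum>k\<le>m. da k * b (Suc m - k))"
  proof (rule sum_mono)
    fix k assume "k \<in> {..m}"
    hence "Suc m - k = Suc (m - k)" by auto
    thus "da k * b (m - k) \<le> da k * b (Suc m - k)" using assms by (simp add: mult_left_mono)
  qed
  also have "\<dots> \<le> (\<Sum>k\<le>Suc m. da k * b (Suc m - k))"
    using assms by simp
  finally show ?thesis .
qed

lemma prod_card:
  assumes fA: "\<And>k. finite {x\<in>P. rk x = k}" and fB: "\<And>k. finite {x\<in>P'. rk' x = k}"
  shows "card {u\<in>P \<times> P'. prod_rk rk rk' u = m}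
     = (\<Sum>k\<le>m. card {x\<in>P. rk x = k} * card {x\<in>P'. rk' x = m - k})"
proof -
  have "{u\<in>P \<times> P'. prod_rk rk rk' u = m} = (\<Union>k\<in>{..m}. {x\<in>P. rk x = k} \<times> {x\<in>P'. rk' x = m - k})"
    by (auto simp: prod_rk_def)
  also have "card \<dots> = (\<Sum>k\<le>m. card ({x\<in>P. rk x = k} \<times> {x\<in>P'. rk' x = m - k}))"
    by (rule card_UN_disjoint) (use fA fB in auto)
  finally show ?thesis by (simp add: card_cartesian_product)
qed

theorem proposition4p4:
  fixes P :: "'a set" and le :: "'a \<Rightarrow> 'a \<Rightarrow> bool" and rk :: "'a \<Rightarrow> nat"
    and P' :: "'b set" and le' :: "'b \<Rightarrow> 'b \<Rightarrow> bool" and rk' :: "'b \<Rightarrow> nat"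
    and r r' :: nat and n j :: int
  assumes "differential_poset P le rk r"
    and "differential_poset P' le' rk' r'"
    and "n \<ge> 1" and "1 \<le> j" and "j \<le> n"
  shows "delta_rank_count (P \<times> P') (prod_rk rk rk') n
           \<ge> delta_rank_count (P \<times> P') (prod_rk rk rk') (n - j)"
proof -
  define a where "a k = int (card {x\<in>P. rk x = k})" for k
  define b where "b k = int (card {x\<in>P'. rk' x = k})" for k
  define da where "da k = a k - (if k = 0 then 0 else a (k - 1))" for k
  define d where "d m = (\<Sum>k\<le>m. da k * b (m - k))" for m
  have fA: "finite {x\<in>P. rk x = k}" for k using assms(1)
    by (auto simp: differential_poset_def graded_locfin_poset_def)
  have fB: "finite {x\<in>P'. rk' x = k}" for k using assms(2)
    by (auto simp: differential_poset_def graded_locfin_poset_def)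
  have ma: "a k \<le> a (Suc k)" for k using rank_mono[OF assms(1)] by (simp add: a_def)
  have mb: "b k \<le> b (Suc k)" for k using rank_mono[OF assms(2)] by (simp add: b_def)
  have da0: "da k \<ge> 0" for k
  proof (cases k)
    case 0 then show ?thesis by (simp add: da_def a_def)
  next
    case (Suc k') then show ?thesis using ma[of k'] by (simp add: da_def)
  qed
  have b0: "b k \<ge> 0" for k by (simp add: b_def)
  have dm: "d m \<le> d (Suc m)" for m unfolding d_def by (rule d_mono[of da b m, OF da0 mb b0])
  have dmono: "d m \<le> d m'" if "m \<le> m'" for m m' using dm that by (rule lift_Suc_mono_le)
  have d0: "d 0 \<ge> 0" using da0 b0 by (simp add: d_def)
  have rc: "rank_count (P \<times> P') (prod_rk rk rk') (int m) = (\<Sum>k\<le>m. a k * b (m - k))" for m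
    by (simp add: rank_count_def prod_card[OF fA fB] a_def b_def)
  have delta: "delta_rank_count (P \<times> P') (prod_rk rk rk') (int m) = d m" for m
  proof (cases m)
    case 0 thus ?thesis using rc[of 0] by (simp add: delta_rank_count_def d_def da_def rank_count_def)
  next
    case (Suc m')
    have e: "int m - 1 = int m'" using Suc by simp
    have "delta_rank_count (P \<times> P') (prod_rk rk rk') (int m)
        = rank_count (P \<times> P') (prod_rk rk rk') (int m) - rank_count (P \<times> P') (prod_rk rk rk') (int m')"
      unfolding delta_rank_count_def e ..
    also have "\<dots> = (\<Sum>k\<le>Suc m'. a k * b (Suc m' - k)) - (\<Sum>k\<le>m'. a k * b (m' - k))"
      unfolding rc Suc ..
    also have "\<dots> = d m" unfolding conv_delta d_def da_def Suc ..
    finally show ?thesis .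
  qed
  have L: "delta_rank_count (P \<times> P') (prod_rk rk rk') n = d (nat n)"
    using delta[of "nat n"] assms(3) by simp
  show ?thesis
  proof (cases "n - j < 0")
    case True
    have "delta_rank_count (P \<times> P') (prod_rk rk rk') (n - j) = 0"
      using True by (simp add: delta_rank_count_def rank_count_def)
    moreover have "d (nat n) \<ge> 0" using d0 dmono[of 0 "nat n"] by simp
    ultimately show ?thesis using L by simp
  next
    case False
    have "delta_rank_count (P \<times> P') (prod_rk rk rk') (n - j) = d (nat (n - j))"
      using delta[of "nat (n - j)"] False by simp
    moreover have "d (nat (n - j)) \<le> d (nat n)" using dmono assms by simp
    ultimately show ?thesis using L by simp
  qed
qed
end
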